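(* The graphs $P_4+P_3$ and $2P_2+C_3$ are of class $\mathcal C_1$.
   Context: All graphs are finite, simple and undirected. $C_n$ and $P_n$ denote the cycle and the path on $n$ vertices; $kG$ denotes the disjoint union of $k$ copies of $G$. The join $G+H$ is obtained from vertex-disjoint copies of $G$ and $H$ by adding all edges between $V(G)$ and $V(H)$. A drawing is 1-planar if each edge is crossed at most once (adjacent edges never cross, no edge crosses itself); a graph is 1-planar if it has such a drawing. For a 1-planar drawing $D$, $D^\times$ is the plane graph obtained by turning each crossing into a new degree-4 vertex (a false vertex); $N_{D^\times}(c)$ is the neighbour set of a false vertex $c$. A 1-planar graph is of class $\mathcal C_0$ if it has a 1-planar drawing with $|N_{D^\times}(c_1)\cap N_{D^\times}(c_2)|=0$ for all distinct false vertices; it is of class $\mathcal C_1$ if it is not of class $\mathcal C_0$ and it has a 1-planar drawing with $|N_{D^\times}(c_1)\cap N_{D^\times}(c_2)|\le 1$ for all distinct false vertices $c_1,c_2$. *)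

theory Defs
  imports "HOL-Analysis.Analysis"
begin

type_synonym 'a graph = "'a set \<times> 'a set set"

definition verts :: "'a graph \<Rightarrow> 'a set" where "verts G = fst G"
definition edges :: "'a graph \<Rightarrow> 'a set set" where "edges G = snd G"

definition simple_graph :: "'a graph \<Rightarrow> bool" where
  "simple_graph G \<longleftrightarrow> finite (verts G) \<and>
     (\<forall>e\<in>edges G. e \<subseteq> verts G \<and> card e = 2)"

definition path_graph :: "nat \<Rightarrow> nat graph" where
  "path_graph n = ({0..<n}, {{i, Suc i} | i. Suc i < n})"

definition cycle_graph :: "nat \<Rightarrow> nat graph" where
  "cycle_graph n = ({0..<n}, {{i, Suc i} | i. Suc i < n} \<union> {{n - 1, 0}})"

definition disj_copies :: "nat \<Rightarrow> 'a graph \<Rightarrow> (nat \<times> 'a) graph" where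
  "disj_copies k G = ({0..<k} \<times> verts G,
     {Pair i ` e | i e. i < k \<and> e \<in> edges G})"

definition graph_join :: "'a graph \<Rightarrow> 'b graph \<Rightarrow> ('a + 'b) graph" where
  "graph_join G H = (Inl ` verts G \<union> Inr ` verts H,
     (image Inl) ` edges G \<union> (image Inr) ` edges H \<union>
     {{Inl u, Inr v} | u v. u \<in> verts G \<and> v \<in> verts H})"

definition edge_interior :: "('a set \<Rightarrow> real \<Rightarrow> complex) \<Rightarrow> 'a set \<Rightarrow> complex set" where
  "edge_interior \<gamma> e = \<gamma> e ` {0<..<1}"

definition is_drawing :: "'a graph \<Rightarrow> ('a \<Rightarrow> complex) \<Rightarrow> ('a set \<Rightarrow> real \<Rightarrow> complex) \<Rightarrow> bool" where
  "is_drawing G p \<gamma> \<longleftrightarrow> inj_on p (verts G) \<and>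
     (\<forall>e\<in>edges G. arc (\<gamma> e) \<and> {pathstart (\<gamma> e), pathfinish (\<gamma> e)} = p ` e \<and>
        (\<forall>v\<in>verts G. p v \<notin> edge_interior \<gamma> e))"

definition crosses :: "('a set \<Rightarrow> real \<Rightarrow> complex) \<Rightarrow> 'a set \<Rightarrow> 'a set \<Rightarrow> bool" where
  "crosses \<gamma> e f \<longleftrightarrow> e \<noteq> f \<and> edge_interior \<gamma> e \<inter> edge_interior \<gamma> f \<noteq> {}"

definition one_planar_drawing :: "'a graph \<Rightarrow> ('a \<Rightarrow> complex) \<Rightarrow> ('a set \<Rightarrow> real \<Rightarrow> complex) \<Rightarrow> bool" where
  "one_planar_drawing G p \<gamma> \<longleftrightarrow> is_drawing G p \<gamma> \<and>
     (\<forall>e\<in>edges G. \<forall>f\<in>edges G. crosses \<gamma> e f \<longrightarrow>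
        e \<inter> f = {} \<and>
        card (edge_interior \<gamma> e \<inter> edge_interior \<gamma> f) = 1 \<and>
        (\<forall>g\<in>edges G. crosses \<gamma> e g \<longrightarrow> g = f))"

definition false_vertices :: "'a graph \<Rightarrow> ('a set \<Rightarrow> real \<Rightarrow> complex) \<Rightarrow> complex set" where
  "false_vertices G \<gamma> = {c. \<exists>e\<in>edges G. \<exists>f\<in>edges G. e \<noteq> f \<and>
      c \<in> edge_interior \<gamma> e \<and> c \<in> edge_interior \<gamma> f}"

text \<open>Neighbourhood of a false vertex c in D^x.  In a 1-planar drawing each edge carries
  at most one crossing, so the neighbours of c in D^x are exactly the end vertices of the two
  edges crossing at c.\<close>
definition false_nbrs :: "'a graph \<Rightarrow> ('a set \<Rightarrow> real \<Rightarrow> complex) \<Rightarrow> complex \<Rightarrow> 'a set" where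
  "false_nbrs G \<gamma> c = {v. \<exists>e\<in>edges G. v \<in> e \<and> c \<in> edge_interior \<gamma> e}"

definition class_C0 :: "'a graph \<Rightarrow> bool" where
  "class_C0 G \<longleftrightarrow> (\<exists>p \<gamma>. one_planar_drawing G p \<gamma> \<and>
     (\<forall>c1\<in>false_vertices G \<gamma>. \<forall>c2\<in>false_vertices G \<gamma>. c1 \<noteq> c2 \<longrightarrow>
        card (false_nbrs G \<gamma> c1 \<inter> false_nbrs G \<gamma> c2) = 0))"

definition class_C1 :: "'a graph \<Rightarrow> bool" where
  "class_C1 G \<longleftrightarrow> \<not> class_C0 G \<and> (\<exists>p \<gamma>. one_planar_drawing G p \<gamma> \<and>
     (\<forall>c1\<in>false_vertices G \<gamma>. \<forall>c2\<in>false_vertices G \<gamma>. c1 \<noteq> c2 \<longrightarrow>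
        card (false_nbrs G \<gamma> c1 \<inter> false_nbrs G \<gamma> c2) \<le> 1))"

end

theory Submission
  imports Defs "HOL-Complex_Analysis.Winding_Numbers"
begin

lemma loop_facts:
  fixes x y :: "real \<Rightarrow> complex"
  assumes "arc x" "arc y" "pathstart x = a" "pathfinish x = b" "pathstart y = a" "pathfinish y = b"
    "path_image x \<inter> path_image y \<subseteq> {a,b}"
  shows "simple_path (x +++ reversepath y)"
    "pathfinish (x +++ reversepath y) = pathstart (x +++ reversepath y)"
    "path_image (x +++ reversepath y) = path_image x \<union> path_image y"
    "\<And>z. z \<notin> path_image x \<union> path_image y \<Longrightarrow>
        winding_number (x +++ reversepath y) z = winding_number x z - winding_number y z"
proof -
  show "simple_path (x +++ reversepath y)"
    using assms by (subst simple_path_join_loop_eq) (auto simp: arc_reversepath)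
  show "pathfinish (x +++ reversepath y) = pathstart (x +++ reversepath y)"
    using assms by simp
  show "path_image (x +++ reversepath y) = path_image x \<union> path_image y"
    using assms by (simp add: path_image_join path_image_reversepath)
  fix z assume z: "z \<notin> path_image x \<union> path_image y"
  have px: "path x" "path y" using assms arc_imp_path by auto
  show "winding_number (x +++ reversepath y) z = winding_number x z - winding_number y z"
    using z px assms
    by (subst winding_number_join) (auto simp: path_image_reversepath winding_number_reversepath)
qed

lemma connected_inside_sub:
  assumes "connected T" "T \<inter> S = {}" "x \<in> T" "x \<in> inside S" "y \<in> T"
  shows "y \<in> inside S"
proof -
  have "connected_component (- S) x y"
    unfolding connected_component_def using assms by blast
  then show ?thesis using inside_same_component assms by blast
qed

lemma connected_outside_sub:
  assumes "connected T" "T \<inter> S = {}" "x \<in> T" "x \<in> outside S" "y \<in> T"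
  shows "y \<in> outside S"
proof -
  have "connected_component (- S) x y"
    unfolding connected_component_def using assms by blast
  then show ?thesis using outside_same_component assms by blast
qed

lemma arc_mid:
  assumes "arc p"
  shows "p (1/2) \<in> path_image p" "p (1/2) \<noteq> pathstart p" "p (1/2) \<noteq> pathfinish p"
proof -
  have inj: "inj_on p {0..1}" using assms arc_def by blast
  show "p (1/2) \<in> path_image p" by (simp add: path_image_def)
  show "p (1/2) \<noteq> pathstart p" unfolding pathstart_def
    using inj_onD[OF inj, of "1/2" 0] by auto
  show "p (1/2) \<noteq> pathfinish p" unfolding pathfinish_def
    using inj_onD[OF inj, of "1/2" 1] by auto
qed

lemma middle_aux:
  fixes p q r :: "real \<Rightarrow> complex"
  assumes arcs: "arc p" "arc q" "arc r"
    and ends: "pathstart p = a" "pathfinish p = b" "pathstart q = a" "pathfinish q = b"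
      "pathstart r = a" "pathfinish r = b"
    and int: "path_image p \<inter> path_image q = {a,b}" "path_image p \<inter> path_image r = {a,b}"
      "path_image q \<inter> path_image r = {a,b}"
    and z: "z \<in> inside (path_image p \<union> path_image q)" "z \<notin> path_image r"
    and zin: "z \<in> inside (path_image q \<union> path_image r)"
    and dis: "path_image r \<inter> inside (path_image p \<union> path_image q) = {}"
  shows "path_image p \<inter> inside (path_image q \<union> path_image r) \<noteq> {}"
proof -
  let ?I = "inside (path_image p \<union> path_image q)"
  have lpq: "simple_path (p +++ reversepath q)" "pathfinish (p +++ reversepath q) = pathstart (p +++ reversepath q)"
     "path_image (p +++ reversepath q) = path_image p \<union> path_image q"
    using loop_facts[OF arcs(1,2) ends(1-4)] int by auto
  have lqr: "simple_path (q +++ reversepath r)" "pathfinish (q +++ reversepath r) = pathstart (q +++ reversepath r)"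
     "path_image (q +++ reversepath r) = path_image q \<union> path_image r"
    using loop_facts[OF arcs(2,3) ends(3-6)] int by auto
  have conI: "connected ?I" using Jordan_inside_outside[OF lpq(1,2)] lpq(3) by simp
  have "?I \<inter> (path_image q \<union> path_image r) = {}"
    using dis inside_no_overlap[of "path_image p \<union> path_image q"] by blast
  then have sub: "?I \<subseteq> inside (path_image q \<union> path_image r)"
    using connected_inside_sub[OF conI _ z(1) zin] by blast
  have fr: "frontier ?I = path_image p \<union> path_image q"
    using Jordan_inside_outside[OF lpq(1,2)] lpq(3) by simp
  have "path_image p \<subseteq> closure ?I"
    using fr frontier_def by (metis Diff_subset Un_upper1 order_trans)
  also have "\<dots> \<subseteq> closure (inside (path_image q \<union> path_image r))"
    using sub closure_mono by blast
  also have "\<dots> = inside (path_image q \<union> path_image r) \<union> (path_image q \<union> path_image r)"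
    using Jordan_inside_outside[OF lqr(1,2)] lqr(3)
    by (metis closure_Un_frontier)
  finally have "path_image p \<subseteq> inside (path_image q \<union> path_image r) \<union> (path_image q \<union> path_image r)" .
  moreover have "p (1/2) \<in> path_image p" "p (1/2) \<notin> path_image q \<union> path_image r"
    using arc_mid[OF arcs(1)] int ends by auto
  ultimately show ?thesis by blast
qed

lemma middle:
  fixes p q r :: "real \<Rightarrow> complex"
  assumes arcs: "arc p" "arc q" "arc r"
    and ends: "pathstart p = a" "pathfinish p = b" "pathstart q = a" "pathfinish q = b"
      "pathstart r = a" "pathfinish r = b"
    and int: "path_image p \<inter> path_image q = {a,b}" "path_image p \<inter> path_image r = {a,b}"
      "path_image q \<inter> path_image r = {a,b}"
  shows "path_image r \<inter> inside (path_image p \<union> path_image q) \<noteq> {} \<or>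
         path_image p \<inter> inside (path_image q \<union> path_image r) \<noteq> {} \<or>
         path_image q \<inter> inside (path_image p \<union> path_image r) \<noteq> {}"
proof (rule ccontr)
  assume H: "\<not> ?thesis"
  have lpq: "simple_path (p +++ reversepath q)" "pathfinish (p +++ reversepath q) = pathstart (p +++ reversepath q)"
     "path_image (p +++ reversepath q) = path_image p \<union> path_image q"
    using loop_facts[OF arcs(1,2) ends(1-4)] int by auto
  have lqr: "simple_path (q +++ reversepath r)" "pathfinish (q +++ reversepath r) = pathstart (q +++ reversepath r)"
     "path_image (q +++ reversepath r) = path_image q \<union> path_image r"
    using loop_facts[OF arcs(2,3) ends(3-6)] int by auto
  have lpr: "simple_path (p +++ reversepath r)" "pathfinish (p +++ reversepath r) = pathstart (p +++ reversepath r)"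
     "path_image (p +++ reversepath r) = path_image p \<union> path_image r"
    using loop_facts[OF arcs(1,3) ends(1,2,5,6)] int by auto
  obtain z where z: "z \<in> inside (path_image p \<union> path_image q)"
    using Jordan_inside_outside[OF lpq(1,2)] lpq(3) by auto
  have zr: "z \<notin> path_image r" using z H by blast
  have zpq: "z \<notin> path_image p \<union> path_image q"
    using z inside_no_overlap by blast
  have w1: "winding_number (p +++ reversepath q) z \<noteq> 0"
    using simple_closed_path_winding_number_inside[OF lpq(1)] z lpq(3) by (metis one_neq_zero neg_equal_0_iff_equal)
  have "winding_number (p +++ reversepath r) z = winding_number (p +++ reversepath q) z + winding_number (q +++ reversepath r) z"
    using loop_facts(4)[OF arcs(1,2) ends(1-4)] loop_facts(4)[OF arcs(2,3) ends(3-6)]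
       loop_facts(4)[OF arcs(1,3) ends(1,2,5,6)] int zr zpq by auto
  then consider "winding_number (p +++ reversepath r) z \<noteq> 0" | "winding_number (q +++ reversepath r) z \<noteq> 0"
    using w1 by fastforce
  then show False
  proof cases
    case 1
    have "z \<notin> outside (path_image p \<union> path_image r)"
      using 1 winding_number_zero_in_outside[of "p +++ reversepath r" z] lpr simple_path_imp_path by auto
    then have zin: "z \<in> inside (path_image p \<union> path_image r)"
      using zr zpq inside_Un_outside[of "path_image p \<union> path_image r"] by blast
    have z': "z \<in> inside (path_image q \<union> path_image p)" using z by (simp add: Un_commute)
    have "path_image q \<inter> inside (path_image p \<union> path_image r) \<noteq> {}"
      using middle_aux[OF arcs(2,1,3) ends(3,4,1,2,5,6) _ int(3) int(2) z' zr zin] int(1) H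
      by (simp add: Int_commute Un_commute)
    then show False using H by blast
  next
    case 2
    have "z \<notin> outside (path_image q \<union> path_image r)"
      using 2 winding_number_zero_in_outside[of "q +++ reversepath r" z] lqr simple_path_imp_path by auto
    then have zin: "z \<in> inside (path_image q \<union> path_image r)"
      using zr zpq inside_Un_outside[of "path_image q \<union> path_image r"] by blast
    show False using middle_aux[OF arcs ends int z zr zin] H by blast
  qed
qed

locale k33 =
  fixes A B :: "nat \<Rightarrow> complex" and g :: "nat \<Rightarrow> nat \<Rightarrow> real \<Rightarrow> complex"
  assumes arcs: "\<And>i j. i < 3 \<Longrightarrow> j < 3 \<Longrightarrow> arc (g i j) \<and> pathstart (g i j) = A i \<and> pathfinish (g i j) = B j"
    and dA: "\<And>i k. i < 3 \<Longrightarrow> k < 3 \<Longrightarrow> A i = A k \<Longrightarrow> i = k"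
    and dB: "\<And>i k. i < 3 \<Longrightarrow> k < 3 \<Longrightarrow> B i = B k \<Longrightarrow> i = k"
    and dAB: "\<And>i j. i < 3 \<Longrightarrow> j < 3 \<Longrightarrow> A i \<noteq> B j"
    and H3: "\<And>i j k l. i < 3 \<Longrightarrow> j < 3 \<Longrightarrow> k < 3 \<Longrightarrow> l < 3 \<Longrightarrow> (i,j) \<noteq> (k,l) \<Longrightarrow>
       path_image (g i j) \<inter> path_image (g k l) \<subseteq> {A i, B j} \<inter> {A k, B l}"
begin

definition P :: "nat \<Rightarrow> real \<Rightarrow> complex" where "P j = g 0 j +++ reversepath (g 1 j)"

lemma A01: "A 0 \<noteq> A 1" using dA[of 0 1] by auto

lemma P_facts:
  assumes j: "j < 3"
  shows "arc (P j)" "pathstart (P j) = A 0" "pathfinish (P j) = A 1"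
    "path_image (P j) = path_image (g 0 j) \<union> path_image (g 1 j)"
proof -
  have a0: "arc (g 0 j)" "pathstart (g 0 j) = A 0" "pathfinish (g 0 j) = B j" using arcs[of 0 j] j by auto
  have a1: "arc (g 1 j)" "pathstart (g 1 j) = A 1" "pathfinish (g 1 j) = B j" using arcs[of 1 j] j by auto
  have "path_image (g 0 j) \<inter> path_image (g 1 j) \<subseteq> {B j}"
    using H3[of 0 j 1 j] j A01 dAB[of 0 j] by auto
  then show "arc (P j)" unfolding P_def using a0 a1
    by (subst arc_join_eq) (auto simp: arc_reversepath path_image_reversepath)
  show "pathstart (P j) = A 0" "pathfinish (P j) = A 1" unfolding P_def using a0 a1 by auto
  show "path_image (P j) = path_image (g 0 j) \<union> path_image (g 1 j)"
    unfolding P_def using a0 a1 by (simp add: path_image_join path_image_reversepath)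
qed

lemma start_in: "i < 3 \<Longrightarrow> j < 3 \<Longrightarrow> A i \<in> path_image (g i j) \<and> B j \<in> path_image (g i j)"
  using arcs[of i j] by (metis pathstart_in_path_image pathfinish_in_path_image)

lemma P_int:
  assumes "j < 3" "k < 3" "j \<noteq> k"
  shows "path_image (P j) \<inter> path_image (P k) = {A 0, A 1}"
proof
  show "{A 0, A 1} \<subseteq> path_image (P j) \<inter> path_image (P k)"
    using assms start_in[of 0 j] start_in[of 1 j] start_in[of 0 k] start_in[of 1 k] P_facts(4) by auto
  have d: "B j \<noteq> B k" using dB assms by blast
  have "path_image (g 0 j) \<inter> path_image (g 0 k) \<subseteq> {A 0}" using H3[of 0 j 0 k] assms d by auto
  moreover have "path_image (g 0 j) \<inter> path_image (g 1 k) \<subseteq> {}"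
  proof -
    have "{A 0, B j} \<inter> {A 1, B k} = {}" using assms d A01 dAB[of 0 k] dAB[of 1 j] by auto
    then show ?thesis using H3[of 0 j 1 k] assms by auto
  qed
  moreover have "path_image (g 1 j) \<inter> path_image (g 0 k) \<subseteq> {}"
  proof -
    have "{A 1, B j} \<inter> {A 0, B k} = {}" using assms d A01 dAB[of 1 k] dAB[of 0 j] by auto
    then show ?thesis using H3[of 1 j 0 k] assms by auto
  qed
  moreover have "path_image (g 1 j) \<inter> path_image (g 1 k) \<subseteq> {A 1}" using H3[of 1 j 1 k] assms d by auto
  ultimately show "path_image (P j) \<inter> path_image (P k) \<subseteq> {A 0, A 1}"
    using P_facts(4) assms by auto
qed

lemma A2_notin: "j < 3 \<Longrightarrow> A 2 \<notin> path_image (P j)"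
proof
  assume j: "j < 3" and a: "A 2 \<in> path_image (P j)"
  have "A 2 \<in> path_image (g 2 j)" using start_in[of 2 j] j by auto
  moreover have "A 2 \<noteq> A 0" "A 2 \<noteq> A 1" using dA[of 2 0] dA[of 2 1] by auto
  moreover have "A 2 \<noteq> B j" using dAB[of 2 j] j by auto
  ultimately show False using a P_facts(4)[OF j] H3[of 0 j 2 j] H3[of 1 j 2 j] j by auto
qed

lemma g2_disj: "j < 3 \<Longrightarrow> k < 3 \<Longrightarrow> j \<noteq> k \<Longrightarrow> path_image (g 2 j) \<inter> path_image (P k) = {}"
proof -
  assume a: "j < 3" "k < 3" "j \<noteq> k"
  have d: "B j \<noteq> B k" using dB a by blast
  have "A 2 \<noteq> A 0" "A 2 \<noteq> A 1" using dA[of 2 0] dA[of 2 1] by auto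
  then show ?thesis using P_facts(4)[OF a(2)] H3[of 2 j 0 k] H3[of 2 j 1 k] a d dAB[of 0 j] dAB[of 1 j]
     dAB[of 2 k] by auto
qed

lemma core:
  assumes mid: "path_image (P 2) \<inter> inside (path_image (P 0) \<union> path_image (P 1)) \<noteq> {}"
  shows False
proof -
  let ?I = "\<lambda>j k. inside (path_image (P j) \<union> path_image (P k))"
  have th: "?I 0 2 \<inter> ?I 1 2 = {} \<and> ?I 0 2 \<union> ?I 1 2 \<union> (path_image (P 2) - {A 0, A 1}) = ?I 0 1"
    by (rule split_inside_simple_closed_curve[OF arc_imp_simple_path[OF P_facts(1)[of 0]] P_facts(2,3)[of 0]
       arc_imp_simple_path[OF P_facts(1)[of 1]] P_facts(2,3)[of 1]
       arc_imp_simple_path[OF P_facts(1)[of 2]] P_facts(2,3)[of 2] A01 P_int[of 0 1] P_int[of 0 2] P_int[of 1 2] mid]) auto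
  have l01: "simple_path (P 0 +++ reversepath (P 1))" "pathfinish (P 0 +++ reversepath (P 1)) = pathstart (P 0 +++ reversepath (P 1))"
     "path_image (P 0 +++ reversepath (P 1)) = path_image (P 0) \<union> path_image (P 1)"
    using loop_facts[OF P_facts(1)[of 0] P_facts(1)[of 1]] P_facts[of 0] P_facts[of 1] P_int[of 0 1] by auto
  have io: "?I 0 1 \<inter> outside (path_image (P 0) \<union> path_image (P 1)) = {}"
     "?I 0 1 \<union> outside (path_image (P 0) \<union> path_image (P 1)) = - (path_image (P 0) \<union> path_image (P 1))"
    using Jordan_inside_outside[OF l01(1,2)] l01(3) by auto
  have A2: "A 2 \<notin> path_image (P 0)" "A 2 \<notin> path_image (P 1)" "A 2 \<notin> path_image (P 2)"
    using A2_notin by auto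
  have B: "B 0 \<in> path_image (P 0)" "B 1 \<in> path_image (P 1)" "B 2 \<in> path_image (P 2)"
    using start_in[of 0 0] start_in[of 0 1] start_in[of 0 2] P_facts(4) by auto
  have B2: "B 2 \<noteq> A 0" "B 2 \<noteq> A 1" using dAB[of 0 2] dAB[of 1 2] by auto
  have con: "\<And>j. j < 3 \<Longrightarrow> connected (path_image (g 2 j))"
    using arcs by (simp add: connected_path_image arc_imp_path)
  have st: "\<And>j. j < 3 \<Longrightarrow> A 2 \<in> path_image (g 2 j) \<and> B j \<in> path_image (g 2 j)"
    using start_in by auto
  consider "A 2 \<in> outside (path_image (P 0) \<union> path_image (P 1))" | "A 2 \<in> ?I 0 2" | "A 2 \<in> ?I 1 2"
    using io(2) th A2 by blast
  then show False
  proof cases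
    case 1
    have "path_image (g 2 2) \<inter> (path_image (P 0) \<union> path_image (P 1)) = {}"
      using g2_disj[of 2 0] g2_disj[of 2 1] by auto
    then have "B 2 \<in> outside (path_image (P 0) \<union> path_image (P 1))"
      using connected_outside_sub[OF con[of 2] _ _ 1] st[of 2] by auto
    moreover have "B 2 \<in> ?I 0 1" using th B B2 by blast
    ultimately show False using io by blast
  next
    case 2
    have "path_image (g 2 1) \<inter> (path_image (P 0) \<union> path_image (P 2)) = {}"
      using g2_disj[of 1 0] g2_disj[of 1 2] by auto
    then have "B 1 \<in> ?I 0 2"
      using connected_inside_sub[OF con[of 1] _ _ 2] st[of 1] by auto
    then have "B 1 \<in> ?I 0 1" using th by blast
    then show False using B inside_no_overlap by blast
  next
    case 3
    have "path_image (g 2 0) \<inter> (path_image (P 1) \<union> path_image (P 2)) = {}"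
      using g2_disj[of 0 1] g2_disj[of 0 2] by auto
    then have "B 0 \<in> ?I 1 2"
      using connected_inside_sub[OF con[of 0] _ _ 3] st[of 0] by auto
    then have "B 0 \<in> ?I 0 1" using th by blast
    then show False using B inside_no_overlap by blast
  qed
qed

end


lemma k33_perm:
  fixes \<sigma> :: "nat \<Rightarrow> nat"
  assumes "k33 A B g" and s: "\<And>j. j < 3 \<Longrightarrow> \<sigma> j < 3" "\<And>j k. j < 3 \<Longrightarrow> k < 3 \<Longrightarrow> \<sigma> j = \<sigma> k \<Longrightarrow> j = k"
  shows "k33 A (\<lambda>j. B (\<sigma> j)) (\<lambda>i j. g i (\<sigma> j))"
proof -
  interpret k33 A B g by fact
  show ?thesis
  proof
    show "\<And>i j. i < 3 \<Longrightarrow> j < 3 \<Longrightarrow> arc (g i (\<sigma> j)) \<and> pathstart (g i (\<sigma> j)) = A i \<and> pathfinish (g i (\<sigma> j)) = B (\<sigma> j)"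
      using arcs s(1) by simp
    show "\<And>i k. i < 3 \<Longrightarrow> k < 3 \<Longrightarrow> A i = A k \<Longrightarrow> i = k" using dA by blast
    show "i = k" if a: "i < 3" "k < 3" "B (\<sigma> i) = B (\<sigma> k)" for i k
    proof -
      have "\<sigma> i = \<sigma> k" using dB[of "\<sigma> i" "\<sigma> k"] s(1)[of i] s(1)[of k] a by simp
      then show ?thesis using s(2) a by simp
    qed
    show "\<And>i j. i < 3 \<Longrightarrow> j < 3 \<Longrightarrow> A i \<noteq> B (\<sigma> j)" using dAB s(1) by simp
    fix i j k l :: nat assume a: "i < 3" "j < 3" "k < 3" "l < 3" "(i, j) \<noteq> (k, l)"
    then have "(i, \<sigma> j) \<noteq> (k, \<sigma> l)" using s(2)[of j l] by auto
    then show "path_image (g i (\<sigma> j)) \<inter> path_image (g k (\<sigma> l)) \<subseteq> {A i, B (\<sigma> j)} \<inter> {A k, B (\<sigma> l)}"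
      using H3[of i "\<sigma> j" k "\<sigma> l"] a s(1)[of j] s(1)[of l] by simp
  qed
qed

lemma s2b: "j < (3::nat) \<Longrightarrow> k < 3 \<Longrightarrow> (if j = 0 then 0 else if j = 1 then 2 else (1::nat)) = (if k = 0 then 0 else if k = 1 then 2 else 1) \<Longrightarrow> j = k"
  by presburger
lemma s1b: "j < (3::nat) \<Longrightarrow> k < 3 \<Longrightarrow> (if j = 0 then 1 else if j = 1 then 2 else (0::nat)) = (if k = 0 then 1 else if k = 1 then 2 else 0) \<Longrightarrow> j = k"
  by presburger

lemma perm1: "k33 A B g \<Longrightarrow> k33 A (\<lambda>j. B (if j = 0 then 1 else if j = 1 then 2 else 0)) (\<lambda>i j. g i (if j = 0 then 1 else if j = 1 then 2 else 0))"
  apply (rule k33_perm[where \<sigma>="\<lambda>j. if j = 0 then 1 else if j = 1 then 2 else 0"])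
  apply assumption
  apply simp
  apply (rule s1b; assumption)
  done

lemma perm2: "k33 A B g \<Longrightarrow> k33 A (\<lambda>j. B (if j = 0 then 0 else if j = 1 then 2 else 1)) (\<lambda>i j. g i (if j = 0 then 0 else if j = 1 then 2 else 1))"
  apply (rule k33_perm[where \<sigma>="\<lambda>j. if j = 0 then 0 else if j = 1 then 2 else 1"])
  apply assumption
  apply simp
  apply (rule s2b; assumption)
  done

theorem k33_false:
  assumes K: "k33 A B g"
  shows False
proof -
  interpret k33 A B g by fact
  have m: "path_image (P 2) \<inter> inside (path_image (P 0) \<union> path_image (P 1)) \<noteq> {} \<or>
         path_image (P 0) \<inter> inside (path_image (P 1) \<union> path_image (P 2)) \<noteq> {} \<or>
         path_image (P 1) \<inter> inside (path_image (P 0) \<union> path_image (P 2)) \<noteq> {}"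
  proof -
    have f: "arc (P 0)" "arc (P 1)" "arc (P 2)" "pathstart (P 0) = A 0" "pathfinish (P 0) = A 1"
      "pathstart (P 1) = A 0" "pathfinish (P 1) = A 1" "pathstart (P 2) = A 0" "pathfinish (P 2) = A 1"
      using P_facts[of 0] P_facts[of 1] P_facts[of 2] by simp_all
    have i: "path_image (P 0) \<inter> path_image (P 1) = {A 0, A 1}" "path_image (P 0) \<inter> path_image (P 2) = {A 0, A 1}"
      "path_image (P 1) \<inter> path_image (P 2) = {A 0, A 1}"
      using P_int[of 0 1] P_int[of 0 2] P_int[of 1 2] by simp_all
    show ?thesis by (rule middle[OF f i])
  qed
  then consider "path_image (P 2) \<inter> inside (path_image (P 0) \<union> path_image (P 1)) \<noteq> {}"
    | "path_image (P 0) \<inter> inside (path_image (P 1) \<union> path_image (P 2)) \<noteq> {}"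
    | "path_image (P 1) \<inter> inside (path_image (P 0) \<union> path_image (P 2)) \<noteq> {}" by blast
  then show False
  proof cases
    case 1 then show False by (rule core)
  next
    case 2
    interpret K: k33 A "\<lambda>j. B (if j = 0 then 1 else if j = 1 then 2 else 0)" "\<lambda>i j. g i (if j = 0 then 1 else if j = 1 then 2 else 0)"
      by (rule perm1[OF K])
    have "K.P 0 = P 1" "K.P 1 = P 2" "K.P 2 = P 0" by (simp_all add: K.P_def P_def)
    then show False using K.core 2 by simp
  next
    case 3
    interpret K: k33 A "\<lambda>j. B (if j = 0 then 0 else if j = 1 then 2 else 1)" "\<lambda>i j. g i (if j = 0 then 0 else if j = 1 then 2 else 1)"
      by (rule perm2[OF K])
    have "K.P 0 = P 0" "K.P 1 = P 2" "K.P 2 = P 1" by (simp_all add: K.P_def P_def)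
    then show False using K.core 3 by simp
  qed
qed

lemma path_image_split: "path_image g = {pathstart g, pathfinish g} \<union> g ` {0<..<1}"
proof -
  have "{0..1::real} = {0, 1} \<union> {0<..<1}" by auto
  then show ?thesis by (auto simp: path_image_def pathstart_def pathfinish_def)
qed

lemma reversepath_interior: "reversepath g ` {0<..<1} = g ` {0<..<1}"
proof -
  have *: "(\<lambda>x. 1 - x) ` {0<..<1::real} = {0<..<1}"
  proof
    show "(\<lambda>x. 1 - x) ` {0<..<1::real} \<subseteq> {0<..<1}" by auto
    show "{0<..<1} \<subseteq> (\<lambda>x. 1 - x) ` {0<..<1::real}"
    proof
      fix y :: real assume "y \<in> {0<..<1}"
      then show "y \<in> (\<lambda>x. 1 - x) ` {0<..<1}" by (intro image_eqI[of _ _ "1 - y"]) auto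
    qed
  qed
  have "reversepath g ` {0<..<1} = g ` ((\<lambda>x. 1 - x) ` {0<..<1})"
    by (simp add: reversepath_def image_image)
  then show ?thesis using * by simp
qed

lemma notC0:
  fixes G :: "'a graph" and a b :: "nat \<Rightarrow> 'a"
  assumes fin: "finite (verts G)" and c7: "card (verts G) \<le> 7"
    and ev: "\<And>e. e \<in> edges G \<Longrightarrow> e \<subseteq> verts G \<and> card e = 2"
    and ia: "\<And>i k. i < 4 \<Longrightarrow> k < 4 \<Longrightarrow> a i = a k \<Longrightarrow> i = k"
    and ib: "\<And>i k. i < 3 \<Longrightarrow> k < 3 \<Longrightarrow> b i = b k \<Longrightarrow> i = k"
    and iab: "\<And>i j. i < 4 \<Longrightarrow> j < 3 \<Longrightarrow> a i \<noteq> b j"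
    and ed: "\<And>i j. i < 4 \<Longrightarrow> j < 3 \<Longrightarrow> {a i, b j} \<in> edges G"
  shows "\<not> class_C0 G"
proof
  assume "class_C0 G"
  then obtain p \<gamma> where D: "one_planar_drawing G p \<gamma>"
    and C0: "\<And>c1 c2. c1 \<in> false_vertices G \<gamma> \<Longrightarrow> c2 \<in> false_vertices G \<gamma> \<Longrightarrow> c1 \<noteq> c2 \<Longrightarrow>
        card (false_nbrs G \<gamma> c1 \<inter> false_nbrs G \<gamma> c2) = 0"
    unfolding class_C0_def by blast
  have injp: "inj_on p (verts G)"
    and dr: "\<And>e. e \<in> edges G \<Longrightarrow> arc (\<gamma> e) \<and> {pathstart (\<gamma> e), pathfinish (\<gamma> e)} = p ` e \<and>
        (\<forall>v\<in>verts G. p v \<notin> edge_interior \<gamma> e)"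
    and cr: "\<And>e f. e \<in> edges G \<Longrightarrow> f \<in> edges G \<Longrightarrow> crosses \<gamma> e f \<Longrightarrow>
        e \<inter> f = {} \<and> card (edge_interior \<gamma> e \<inter> edge_interior \<gamma> f) = 1 \<and>
        (\<forall>g\<in>edges G. crosses \<gamma> e g \<longrightarrow> g = f)"
    using D unfolding one_planar_drawing_def is_drawing_def by blast+
  have fv: "c \<in> false_vertices G \<gamma> \<Longrightarrow> \<exists>S. S \<subseteq> false_nbrs G \<gamma> c \<and> card S = 4" for c
  proof -
    assume "c \<in> false_vertices G \<gamma>"
    then obtain e f where ef: "e \<in> edges G" "f \<in> edges G" "e \<noteq> f" "c \<in> edge_interior \<gamma> e" "c \<in> edge_interior \<gamma> f"
      unfolding false_vertices_def by blast
    then have "crosses \<gamma> e f" unfolding crosses_def by blast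
    then have "e \<inter> f = {}" using cr ef by blast
    moreover have "card e = 2" "card f = 2" using ev ef by blast+
    moreover have "finite e" "finite f" by (rule finite_subset[OF _ fin], use ev ef in blast)+
    ultimately have "card (e \<union> f) = 4" by (simp add: card_Un_disjoint)
    moreover have "e \<union> f \<subseteq> false_nbrs G \<gamma> c" using ef unfolding false_nbrs_def by blast
    ultimately show ?thesis by blast
  qed
  have nbv: "false_nbrs G \<gamma> c \<subseteq> verts G" for c
    unfolding false_nbrs_def using ev by blast
  have one: "c1 = c2" if h12: "c1 \<in> false_vertices G \<gamma>" "c2 \<in> false_vertices G \<gamma>" for c1 c2
  proof (rule ccontr)
    assume ne: "c1 \<noteq> c2"
    obtain S1 where S1: "S1 \<subseteq> false_nbrs G \<gamma> c1" "card S1 = 4" using fv[OF h12(1)] by blast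
    obtain S2 where S2: "S2 \<subseteq> false_nbrs G \<gamma> c2" "card S2 = 4" using fv[OF h12(2)] by blast
    note S = S1 S2
    have "card (false_nbrs G \<gamma> c1 \<inter> false_nbrs G \<gamma> c2) = 0" using C0 h12 ne by blast
    moreover have "finite (false_nbrs G \<gamma> c1 \<inter> false_nbrs G \<gamma> c2)"
      by (rule finite_subset[OF _ fin]) (use nbv in blast)
    ultimately have "false_nbrs G \<gamma> c1 \<inter> false_nbrs G \<gamma> c2 = {}" by simp
    then have dj: "S1 \<inter> S2 = {}" using S by blast
    have sv: "S1 \<union> S2 \<subseteq> verts G" using S nbv by blast
    have fs: "finite S1" "finite S2"
      by (rule finite_subset[OF _ fin], use S(1,3) nbv in blast)+
    have "card (S1 \<union> S2) = 8" using card_Un_disjoint[OF fs dj] S(2,4) by simp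
    moreover have "card (S1 \<union> S2) \<le> card (verts G)" by (rule card_mono[OF fin sv])
    ultimately show False using c7 by simp
  qed
  obtain r where r: "r < 4" and rgood: "\<And>e f. e \<in> edges G \<Longrightarrow> f \<in> edges G \<Longrightarrow> e \<noteq> f \<Longrightarrow>
      edge_interior \<gamma> e \<inter> edge_interior \<gamma> f \<noteq> {} \<Longrightarrow>
      (\<exists>i<4. \<exists>j<3. e = {a i, b j}) \<Longrightarrow> (\<exists>i<4. \<exists>j<3. f = {a i, b j}) \<Longrightarrow>
      r \<in> {i. i < 4 \<and> a i \<in> e \<union> f}"
  proof (cases "\<exists>e0\<in>edges G. \<exists>f0\<in>edges G. e0 \<noteq> f0 \<and> edge_interior \<gamma> e0 \<inter> edge_interior \<gamma> f0 \<noteq> {}")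
    case False
    show ?thesis
    proof (rule that[of 0])
      fix e f assume "e \<in> edges G" "f \<in> edges G" "e \<noteq> f" "edge_interior \<gamma> e \<inter> edge_interior \<gamma> f \<noteq> {}"
      then show "0 \<in> {i. i < 4 \<and> a i \<in> e \<union> f}" using False by blast
    qed simp
  next
    case True
    then obtain e0 f0 c0 where e0: "e0 \<in> edges G" "f0 \<in> edges G" "e0 \<noteq> f0" "c0 \<in> edge_interior \<gamma> e0" "c0 \<in> edge_interior \<gamma> f0"
      by blast
    have c0: "c0 \<in> false_vertices G \<gamma>" unfolding false_vertices_def using e0 by blast
    have cef: "crosses \<gamma> e0 f0" "crosses \<gamma> f0 e0" unfolding crosses_def using e0 by blast+
    have sub: "g \<in> {e0, f0}" if g: "g \<in> edges G" "h \<in> edges G" "g \<noteq> h" "edge_interior \<gamma> g \<inter> edge_interior \<gamma> h \<noteq> {}" for g h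
    proof -
      obtain c where c: "c \<in> edge_interior \<gamma> g" "c \<in> edge_interior \<gamma> h" using g by blast
      have "c \<in> false_vertices G \<gamma>" unfolding false_vertices_def using g c by blast
      then have "c = c0" using one c0 by blast
      show ?thesis
      proof (rule ccontr)
        assume "g \<notin> {e0, f0}"
        then have "crosses \<gamma> e0 g" unfolding crosses_def using c \<open>c = c0\<close> e0 by blast
        then have "g = f0" using cr[OF e0(1,2) cef(1)] g by blast
        then show False using \<open>g \<notin> {e0, f0}\<close> by blast
      qed
    qed
    show ?thesis
    proof (cases "\<exists>i<4. a i \<in> e0 \<union> f0")
      case True
      then obtain i where i: "i < 4" "a i \<in> e0 \<union> f0" by blast
      show ?thesis
      proof (rule that[of i, OF i(1)])
        fix e f assume h: "e \<in> edges G" "f \<in> edges G" "e \<noteq> f" "edge_interior \<gamma> e \<inter> edge_interior \<gamma> f \<noteq> {}"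
        have "e \<in> {e0, f0}" using sub h by blast
        moreover have "f \<in> {e0, f0}" using sub[of f e] h by blast
        ultimately have "e \<union> f = e0 \<union> f0" using h by blast
        then show "i \<in> {i. i < 4 \<and> a i \<in> e \<union> f}" using i by auto
      qed
    next
      case False
      show ?thesis
      proof (rule that[of 0])
        fix e f assume h: "e \<in> edges G" "f \<in> edges G" "e \<noteq> f" "edge_interior \<gamma> e \<inter> edge_interior \<gamma> f \<noteq> {}"
          and he: "\<exists>i<4. \<exists>j<3. e = {a i, b j}"
        have "e \<in> {e0, f0}" using sub h by blast
        then show "0 \<in> {i. i < 4 \<and> a i \<in> e \<union> f}" using he False by blast
      qed simp
    qed
  qed
  define \<iota> :: "nat \<Rightarrow> nat" where "\<iota> i = (if i < r then i else Suc i)" for i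
  have \<iota>: "\<And>i. i < 3 \<Longrightarrow> \<iota> i < 4 \<and> \<iota> i \<noteq> r"
    "\<And>i k. i < 3 \<Longrightarrow> k < 3 \<Longrightarrow> \<iota> i = \<iota> k \<Longrightarrow> i = k"
    using r unfolding \<iota>_def by (auto split: if_splits)
  have av: "a i \<in> verts G" if "i < 4" for i using ev[OF ed[OF that, of 0]] by simp
  have bv: "b j \<in> verts G" if "j < 3" for j using ev[OF ed[OF _ that, of 0]] by simp
  define E where "E i j = {a (\<iota> i), b j}" for i j
  define A where "A i = p (a (\<iota> i))" for i
  define B where "B j = p (b j)" for j
  define gg where "gg i j = (if pathstart (\<gamma> (E i j)) = A i then \<gamma> (E i j) else reversepath (\<gamma> (E i j)))" for i j
  have Eed: "\<And>i j. i < 3 \<Longrightarrow> j < 3 \<Longrightarrow> E i j \<in> edges G" unfolding E_def using ed \<iota> by blast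
  have AB: "\<And>i j. i < 3 \<Longrightarrow> j < 3 \<Longrightarrow> A i \<noteq> B j"
    unfolding A_def B_def using inj_onD[OF injp] av bv iab \<iota> by metis
  have F1: "arc (gg i j) \<and> pathstart (gg i j) = A i \<and> pathfinish (gg i j) = B j" if "i < 3" "j < 3" for i j
  proof -
    have d: "arc (\<gamma> (E i j))" "{pathstart (\<gamma> (E i j)), pathfinish (\<gamma> (E i j))} = {A i, B j}"
      using dr[OF Eed[OF that]] unfolding E_def A_def B_def by auto
    show ?thesis using d AB[OF that] unfolding gg_def
      by (auto simp: arc_reversepath doubleton_eq_iff)
  qed
  have F2: "path_image (gg i j) = {A i, B j} \<union> edge_interior \<gamma> (E i j)" if "i < 3" "j < 3" for i j
  proof -
    have "path_image (gg i j) = {pathstart (gg i j), pathfinish (gg i j)} \<union> gg i j ` {0<..<1}"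
      by (rule path_image_split)
    moreover have "gg i j ` {0<..<1} = edge_interior \<gamma> (E i j)"
      unfolding gg_def edge_interior_def by (simp add: reversepath_interior)
    ultimately show ?thesis using F1[OF that] by simp
  qed
  have F3: "A k \<notin> edge_interior \<gamma> (E i j) \<and> B l \<notin> edge_interior \<gamma> (E i j)"
    if "i < 3" "j < 3" "k < 3" "l < 3" for i j k l
    using dr[OF Eed[OF that(1,2)]] av[OF \<iota>(1)[OF that(3), THEN conjunct1]] bv[OF that(4)]
    unfolding A_def B_def by blast
  have F4: "edge_interior \<gamma> (E i j) \<inter> edge_interior \<gamma> (E k l) = {}"
    if "i < 3" "j < 3" "k < 3" "l < 3" "(i, j) \<noteq> (k, l)" for i j k l
  proof (rule ccontr)
    assume m: "edge_interior \<gamma> (E i j) \<inter> edge_interior \<gamma> (E k l) \<noteq> {}"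
    have ne: "E i j \<noteq> E k l"
    proof
      assume "E i j = E k l"
      then have "a (\<iota> i) = a (\<iota> k)" "b j = b l"
        unfolding E_def using iab \<iota> that by (auto simp: doubleton_eq_iff)
      then show False using ia ib \<iota> that by (metis prod.inject)
    qed
    have "r \<in> {i'. i' < 4 \<and> a i' \<in> E i j \<union> E k l}"
      by (rule rgood[OF Eed[OF that(1,2)] Eed[OF that(3,4)] ne m]) (use that \<iota> E_def in blast)+
    then have "a r \<in> {a (\<iota> i), b j, a (\<iota> k), b l}" unfolding E_def by blast
    then show False using ia[of r "\<iota> i"] ia[of r "\<iota> k"] iab[of r j] iab[of r l] r \<iota> that by auto
  qed
  have "k33 A B gg"
  proof
    show "\<And>i j. i < 3 \<Longrightarrow> j < 3 \<Longrightarrow> arc (gg i j) \<and> pathstart (gg i j) = A i \<and> pathfinish (gg i j) = B j"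
      by (rule F1)
    show "i = k" if "i < 3" "k < 3" "A i = A k" for i k
    proof -
      have "a (\<iota> i) = a (\<iota> k)" using inj_onD[OF injp] that av \<iota> unfolding A_def by metis
      then show ?thesis using ia \<iota> that by metis
    qed
    show "i = k" if "i < 3" "k < 3" "B i = B k" for i k
      using inj_onD[OF injp] that bv ib unfolding B_def by metis
    show "\<And>i j. i < 3 \<Longrightarrow> j < 3 \<Longrightarrow> A i \<noteq> B j" by (rule AB)
    fix i j k l :: nat assume h: "i < 3" "j < 3" "k < 3" "l < 3" "(i, j) \<noteq> (k, l)"
    show "path_image (gg i j) \<inter> path_image (gg k l) \<subseteq> {A i, B j} \<inter> {A k, B l}"
      unfolding F2[OF h(1,2)] F2[OF h(3,4)]
      using F3[OF h(1,2,3,4)] F3[OF h(3,4,1,2)] F4[OF h] by blast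
  qed
  then show False by (rule k33_false)
qed

definition cr :: "complex \<Rightarrow> complex \<Rightarrow> complex \<Rightarrow> real" where
  "cr a b c = (Re b - Re a) * (Im c - Im a) - (Im b - Im a) * (Re c - Re a)"

definition samesign :: "real \<Rightarrow> real \<Rightarrow> bool" where
  "samesign x y \<longleftrightarrow> (0 \<le> x \<and> 0 \<le> y \<and> (0 < x \<or> 0 < y)) \<or> (x \<le> 0 \<and> y \<le> 0 \<and> (x < 0 \<or> y < 0))"

definition sep :: "complex \<Rightarrow> complex \<Rightarrow> complex \<Rightarrow> complex \<Rightarrow> bool" where
  "sep a b c d \<longleftrightarrow> samesign (cr a b c) (cr a b d) \<or> samesign (cr c d a) (cr c d b)"

lemma cr_comb: "cr a b ((1 - u) *\<^sub>R c + u *\<^sub>R d) = (1 - u) * cr a b c + u * cr a b d"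
  unfolding cr_def by (simp add: algebra_simps)

lemma cr_on: "x \<in> closed_segment a b \<Longrightarrow> cr a b x = 0"
proof -
  assume "x \<in> closed_segment a b"
  then obtain u where "x = (1 - u) *\<^sub>R a + u *\<^sub>R b" by (auto simp: in_segment)
  then show ?thesis by (simp add: cr_comb, simp add: cr_def)
qed

lemma samesign_comb: "samesign x y \<Longrightarrow> 0 < u \<Longrightarrow> u < 1 \<Longrightarrow> (1 - u) * x + u * y \<noteq> 0"
proof -
  assume s: "samesign x y" and u: "0 < u" "u < 1"
  have "0 < (1 - u) * x + u * y \<or> (1 - u) * x + u * y < 0"
    using s u unfolding samesign_def
    by (smt (verit) mult_pos_pos mult_nonneg_nonneg mult_pos_neg mult_nonneg_nonpos)
  then show ?thesis by auto
qed

lemma sep_disj_aux: "samesign (cr a b c) (cr a b d) \<Longrightarrow> open_segment a b \<inter> open_segment c d = {}"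
proof (rule ccontr)
  assume s: "samesign (cr a b c) (cr a b d)" and "open_segment a b \<inter> open_segment c d \<noteq> {}"
  then obtain x where x: "x \<in> open_segment a b" "x \<in> open_segment c d" by blast
  have "cr a b x = 0" using x(1) cr_on open_closed_segment by blast
  moreover obtain u where "0 < u" "u < 1" "x = (1 - u) *\<^sub>R c + u *\<^sub>R d" using x(2) by (auto simp: in_segment)
  ultimately show False using samesign_comb[OF s] by (simp add: cr_comb)
qed

lemma sep_disj: "sep a b c d \<Longrightarrow> open_segment a b \<inter> open_segment c d = {}"
  unfolding sep_def using sep_disj_aux[of a b c d] sep_disj_aux[of c d a b] by blast

lemma avoid: "cr a b w \<noteq> 0 \<Longrightarrow> w \<notin> open_segment a b"
  using cr_on open_closed_segment by blast

lemma cross_point: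
  assumes "a \<noteq> b" "c \<noteq> d" "0 < t" "t < 1" "0 < s" "s < 1"
    and z: "(1 - t) *\<^sub>R a + t *\<^sub>R b = (1 - s) *\<^sub>R c + s *\<^sub>R d"
    and det: "(Re b - Re a) * (Im d - Im c) - (Im b - Im a) * (Re d - Re c) \<noteq> 0"
  shows "open_segment a b \<inter> open_segment c d = {(1 - t) *\<^sub>R a + t *\<^sub>R b}"
proof -
  let ?z = "(1 - t) *\<^sub>R a + t *\<^sub>R b"
  have zin: "?z \<in> open_segment a b" "?z \<in> open_segment c d"
    using assms unfolding in_segment by (metis, metis)
  have "x = ?z" if x: "x \<in> open_segment a b" "x \<in> open_segment c d" for x
  proof -
    have e: "cr a b x = 0" "cr c d x = 0" "cr a b ?z = 0" "cr c d ?z = 0"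
      using x zin cr_on open_closed_segment by blast+
    define P where "P = Re x - Re ?z"
    define Q where "Q = Im x - Im ?z"
    have e1: "(Re b - Re a) * Q - (Im b - Im a) * P = 0"
      using e(1,3) unfolding cr_def P_def Q_def by (simp add: algebra_simps)
    have e2: "(Re d - Re c) * Q - (Im d - Im c) * P = 0"
      using e(2,4) unfolding cr_def P_def Q_def by (simp add: algebra_simps)
    have "((Re b - Re a) * (Im d - Im c) - (Im b - Im a) * (Re d - Re c)) * P = 0"
      using e1 e2 by algebra
    then have "P = 0" using det by simp
    moreover have "((Re b - Re a) * (Im d - Im c) - (Im b - Im a) * (Re d - Re c)) * Q = 0"
      using e1 e2 by algebra
    then have "Q = 0" using det by simp
    ultimately show ?thesis unfolding P_def Q_def by (simp add: complex_eq_iff)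
  qed
  then show ?thesis using zin by blast
qed

lemma linepath_interior: "a \<noteq> b \<Longrightarrow> linepath a b ` {0<..<1} = open_segment a b"
  unfolding linepath_def by (auto simp: in_segment image_iff) (metis greaterThanLessThan_iff)


definition gam :: "('a \<times> 'a) list \<Rightarrow> ('a \<Rightarrow> complex) \<Rightarrow> 'a set \<Rightarrow> real \<Rightarrow> complex" where
  "gam L p e = (let uv = (SOME uv. uv \<in> set L \<and> e = {fst uv, snd uv}) in linepath (p (fst uv)) (p (snd uv)))"

lemma gam_facts:
  assumes uv: "(u, v) \<in> set L" and dp: "\<And>u v. (u, v) \<in> set L \<Longrightarrow> p u \<noteq> p v"
  shows "arc (gam L p {u, v})" "{pathstart (gam L p {u, v}), pathfinish (gam L p {u, v})} = {p u, p v}"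
    "edge_interior (gam L p) {u, v} = open_segment (p u) (p v)"
proof -
  define w where "w = (SOME uv. uv \<in> set L \<and> {u, v} = {fst uv, snd uv})"
  have "w \<in> set L \<and> {u, v} = {fst w, snd w}"
    unfolding w_def by (rule someI[of _ "(u, v)"]) (use uv in simp)
  then have w: "w \<in> set L" "(fst w = u \<and> snd w = v) \<or> (fst w = v \<and> snd w = u)"
    by (auto simp: doubleton_eq_iff)
  have g: "gam L p {u, v} = linepath (p (fst w)) (p (snd w))" unfolding gam_def w_def Let_def ..
  have d: "p (fst w) \<noteq> p (snd w)" using dp[of "fst w" "snd w"] w(1) by simp
  show "arc (gam L p {u, v})" unfolding g using d by (simp add: arc_linepath)
  show "{pathstart (gam L p {u, v}), pathfinish (gam L p {u, v})} = {p u, p v}" unfolding g using w(2) by auto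
  show "edge_interior (gam L p) {u, v} = open_segment (p u) (p v)"
    unfolding edge_interior_def g linepath_interior[OF d] using w(2) open_segment_commute by metis
qed

lemma straight_C1:
  fixes G :: "'a graph" and p :: "'a \<Rightarrow> complex" and L :: "('a \<times> 'a) list"
    and X :: "('a \<times> 'a \<times> 'a \<times> 'a \<times> real \<times> real) list"
  assumes E: "edges G = (\<lambda>(u,v). {u,v}) ` set L"
    and injp: "inj_on p (verts G)"
    and Lv: "\<forall>(u,v)\<in>set L. u \<in> verts G \<and> v \<in> verts G \<and> u \<noteq> v"
    and av: "\<forall>(u,v)\<in>set L. \<forall>w\<in>verts G. w = u \<or> w = v \<or> cr (p u) (p v) (p w) \<noteq> 0"
    and pr: "\<forall>(u,v)\<in>set L. \<forall>(u',v')\<in>set L. {u,v} = {u',v'} \<or> sep (p u) (p v) (p u') (p v') \<or>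
        (\<exists>(a,b,c,d,t,s)\<in>set X. ({a,b} = {u,v} \<and> {c,d} = {u',v'}) \<or> ({a,b} = {u',v'} \<and> {c,d} = {u,v}))"
    and Xok: "\<forall>(a,b,c,d,t,s)\<in>set X. (a,b) \<in> set L \<and> (c,d) \<in> set L \<and> distinct [a,b,c,d] \<and>
        0 < t \<and> t < 1 \<and> 0 < s \<and> s < 1 \<and>
        (1 - t) *\<^sub>R p a + t *\<^sub>R p b = (1 - s) *\<^sub>R p c + s *\<^sub>R p d \<and>
        (Re (p b) - Re (p a)) * (Im (p d) - Im (p c)) - (Im (p b) - Im (p a)) * (Re (p d) - Re (p c)) \<noteq> 0"
    and Xdis: "\<forall>(a,b,c,d,t,s)\<in>set X. \<forall>(a',b',c',d',t',s')\<in>set X. (a,b,c,d,t,s) \<noteq> (a',b',c',d',t',s') \<longrightarrow>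
        {a,b} \<noteq> {a',b'} \<and> {a,b} \<noteq> {c',d'} \<and> {c,d} \<noteq> {a',b'} \<and> {c,d} \<noteq> {c',d'} \<and>
        card ({a,b,c,d} \<inter> {a',b',c',d'}) \<le> 1"
  shows "\<exists>p \<gamma>. one_planar_drawing G p \<gamma> \<and> (\<forall>c1\<in>false_vertices G \<gamma>. \<forall>c2\<in>false_vertices G \<gamma>.
            c1 \<noteq> c2 \<longrightarrow> card (false_nbrs G \<gamma> c1 \<inter> false_nbrs G \<gamma> c2) \<le> 1)"
proof -
  define \<gamma> where "\<gamma> = gam L p"
  have Lv': "u \<in> verts G \<and> v \<in> verts G \<and> u \<noteq> v" if "(u,v) \<in> set L" for u v
    using bspec[OF Lv that] by simp
  have dp: "p u \<noteq> p v" if "(u,v) \<in> set L" for u v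
    using Lv'[OF that] inj_onD[OF injp] by blast
  have gf1: "arc (\<gamma> {u, v})" and gf2: "{pathstart (\<gamma> {u, v}), pathfinish (\<gamma> {u, v})} = {p u, p v}"
    and gf3: "edge_interior \<gamma> {u, v} = open_segment (p u) (p v)" if "(u,v) \<in> set L" for u v
    unfolding \<gamma>_def using gam_facts[where L=L and p=p, OF that dp] by blast+
  have Eobt: "\<exists>u v. (u,v) \<in> set L \<and> e = {u,v}" if "e \<in> edges G" for e
    using that unfolding E by auto
  have Xf: "(a,b) \<in> set L \<and> (c,d) \<in> set L \<and> distinct [a,b,c,d] \<and>
        0 < t \<and> t < 1 \<and> 0 < s \<and> s < 1 \<and>
        (1 - t) *\<^sub>R p a + t *\<^sub>R p b = (1 - s) *\<^sub>R p c + s *\<^sub>R p d \<and>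
        (Re (p b) - Re (p a)) * (Im (p d) - Im (p c)) - (Im (p b) - Im (p a)) * (Re (p d) - Re (p c)) \<noteq> 0"
    if "(a,b,c,d,t,s) \<in> set X" for a b c d t s
    using bspec[OF Xok that] by simp
  have Xd: "{a,b} \<noteq> {a',b'} \<and> {a,b} \<noteq> {c',d'} \<and> {c,d} \<noteq> {a',b'} \<and> {c,d} \<noteq> {c',d'} \<and>
        card ({a,b,c,d} \<inter> {a',b',c',d'}) \<le> 1"
    if "(a,b,c,d,t,s) \<in> set X" "(a',b',c',d',t',s') \<in> set X" "(a,b,c,d,t,s) \<noteq> (a',b',c',d',t',s')"
    for a b c d t s a' b' c' d' t' s'
    using bspec[OF bspec[OF Xdis that(1), unfolded prod.case] that(2)] that(3) by simp
  have zpt: "edge_interior \<gamma> {a,b} \<inter> edge_interior \<gamma> {c,d} = {(1 - t) *\<^sub>R p a + t *\<^sub>R p b}"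
    if "(a,b,c,d,t,s) \<in> set X" for a b c d t s
  proof -
    have f: "(a,b) \<in> set L" "(c,d) \<in> set L" using Xf[OF that] by auto
    have "open_segment (p a) (p b) \<inter> open_segment (p c) (p d) = {(1 - t) *\<^sub>R p a + t *\<^sub>R p b}"
      by (rule cross_point) (use Xf[OF that] dp[OF f(1)] dp[OF f(2)] in auto)
    then show ?thesis using gf3[OF f(1)] gf3[OF f(2)] by simp
  qed
  have meet: "\<exists>(a,b,c,d,t,s)\<in>set X. ({a,b} = e \<and> {c,d} = f) \<or> ({a,b} = f \<and> {c,d} = e)"
    if h: "e \<in> edges G" "f \<in> edges G" "e \<noteq> f" "edge_interior \<gamma> e \<inter> edge_interior \<gamma> f \<noteq> {}" for e f
  proof -
    obtain u v where uv: "(u,v) \<in> set L" "e = {u,v}" using Eobt h(1) by blast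
    obtain u' v' where uv': "(u',v') \<in> set L" "f = {u',v'}" using Eobt h(2) by blast
    have D: "{u,v} = {u',v'} \<or> sep (p u) (p v) (p u') (p v') \<or>
        (\<exists>(a,b,c,d,t,s)\<in>set X. ({a,b} = {u,v} \<and> {c,d} = {u',v'}) \<or> ({a,b} = {u',v'} \<and> {c,d} = {u,v}))"
      by (rule bspec[OF bspec[OF pr uv(1), unfolded prod.case] uv'(1), unfolded prod.case])
    have "open_segment (p u) (p v) \<inter> open_segment (p u') (p v') \<noteq> {}"
      using h(4) gf3[OF uv(1)] gf3[OF uv'(1)] uv(2) uv'(2) by simp
    then have ns: "\<not> sep (p u) (p v) (p u') (p v')" using sep_disj by blast
    from D show ?thesis
    proof (elim disjE)
      assume "{u,v} = {u',v'}" then show ?thesis using h(3) uv(2) uv'(2) by simp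
    next
      assume "sep (p u) (p v) (p u') (p v')" then show ?thesis using ns by contradiction
    next
      assume ex: "\<exists>(a,b,c,d,t,s)\<in>set X. ({a,b} = {u,v} \<and> {c,d} = {u',v'}) \<or> ({a,b} = {u',v'} \<and> {c,d} = {u,v})"
      show ?thesis unfolding uv(2) uv'(2) by (rule ex)
    qed
  qed
  have same: "(a,b,c,d,t,s) = (a',b',c',d',t',s')"
    if "(a,b,c,d,t,s) \<in> set X" "(a',b',c',d',t',s') \<in> set X"
      "e \<in> {{a,b},{c,d}}" "e \<in> {{a',b'},{c',d'}}" for a b c d t s a' b' c' d' t' s' e
  proof (rule ccontr)
    assume n: "(a,b,c,d,t,s) \<noteq> (a',b',c',d',t',s')"
    have i: "{a,b} \<noteq> {a',b'}" "{a,b} \<noteq> {c',d'}" "{c,d} \<noteq> {a',b'}" "{c,d} \<noteq> {c',d'}"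
      using Xd[OF that(1,2) n] by blast+
    have "e = {a,b} \<or> e = {c,d}" "e = {a',b'} \<or> e = {c',d'}" using that(3,4) by simp_all
    then show False using i by metis
  qed
  have ne: "{a,b} \<noteq> {c,d}" "{a,b} \<inter> {c,d} = {}" if "(a,b,c,d,t,s) \<in> set X" for a b c d t s
  proof -
    have "a \<noteq> c" "a \<noteq> d" "b \<noteq> c" "b \<noteq> d" using Xf[OF that] by simp_all
    then show "{a,b} \<noteq> {c,d}" "{a,b} \<inter> {c,d} = {}" by blast+
  qed
  have opd: "one_planar_drawing G p \<gamma>"
    unfolding one_planar_drawing_def is_drawing_def
  proof (intro conjI ballI impI)
    show "inj_on p (verts G)" by (rule injp)
    fix e assume e: "e \<in> edges G"
    then obtain u v where uv: "(u,v) \<in> set L" "e = {u,v}" using Eobt by blast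
    show "arc (\<gamma> e)" using gf1[OF uv(1)] uv(2) by simp
    show "{pathstart (\<gamma> e), pathfinish (\<gamma> e)} = p ` e" using gf2[OF uv(1)] uv(2) by simp
    fix w assume w: "w \<in> verts G"
    have "w = u \<or> w = v \<or> cr (p u) (p v) (p w) \<noteq> 0" using bspec[OF bspec[OF av uv(1), unfolded prod.case] w] by simp
    then show "p w \<notin> edge_interior \<gamma> e"
    proof -
      have "p w \<notin> open_segment (p u) (p v)"
        using \<open>w = u \<or> w = v \<or> cr (p u) (p v) (p w) \<noteq> 0\<close> avoid unfolding open_segment_def by blast
      then show ?thesis using gf3[OF uv(1)] uv(2) by simp
    qed
  next
    fix e f assume ef: "e \<in> edges G" "f \<in> edges G" and c: "crosses \<gamma> e f"
    then have c': "e \<noteq> f" "edge_interior \<gamma> e \<inter> edge_interior \<gamma> f \<noteq> {}" unfolding crosses_def by auto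
    obtain a b cc d t s where x: "(a,b,cc,d,t,s) \<in> set X" and
      o: "({a,b} = e \<and> {cc,d} = f) \<or> ({a,b} = f \<and> {cc,d} = e)"
      using meet[OF ef c'] by auto
    show "e \<inter> f = {}" using ne(2)[OF x] o by blast
    show "card (edge_interior \<gamma> e \<inter> edge_interior \<gamma> f) = 1"
      using zpt[OF x] o by (metis Int_commute is_singletonI is_singleton_altdef)
    fix g assume g: "g \<in> edges G" and cg: "crosses \<gamma> e g"
    then have cg': "e \<noteq> g" "edge_interior \<gamma> e \<inter> edge_interior \<gamma> g \<noteq> {}" unfolding crosses_def by auto
    obtain a' b' c2 d' t' s' where x': "(a',b',c2,d',t',s') \<in> set X" and
      o': "({a',b'} = e \<and> {c2,d'} = g) \<or> ({a',b'} = g \<and> {c2,d'} = e)"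
      using meet[OF ef(1) g cg'] by auto
    have "(a,b,cc,d,t,s) = (a',b',c2,d',t',s')" by (rule same[OF x x', of e]) (use o o' in blast)+
    then show "g = f" using o o' cg'(1) c'(1) by auto
  qed
  have fvx: "\<exists>a b cc d t s. (a,b,cc,d,t,s) \<in> set X \<and> c = (1 - t) *\<^sub>R p a + t *\<^sub>R p b \<and>
       false_nbrs G \<gamma> c \<subseteq> {a,b,cc,d}" if hc: "c \<in> false_vertices G \<gamma>" for c
  proof -
    obtain e f where ef: "e \<in> edges G" "f \<in> edges G" "e \<noteq> f" "c \<in> edge_interior \<gamma> e" "c \<in> edge_interior \<gamma> f"
      using hc unfolding false_vertices_def by blast
    obtain a b cc d t s where x: "(a,b,cc,d,t,s) \<in> set X" and
      o: "({a,b} = e \<and> {cc,d} = f) \<or> ({a,b} = f \<and> {cc,d} = e)"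
      using meet[OF ef(1-3)] ef(4,5) by blast
    have cz: "c = (1 - t) *\<^sub>R p a + t *\<^sub>R p b" using zpt[OF x] o ef(4,5) by blast
    have "false_nbrs G \<gamma> c \<subseteq> {a,b,cc,d}"
    proof
      fix v assume "v \<in> false_nbrs G \<gamma> c"
      then obtain g where g: "g \<in> edges G" "v \<in> g" "c \<in> edge_interior \<gamma> g" unfolding false_nbrs_def by blast
      show "v \<in> {a,b,cc,d}"
      proof (cases "g = e")
        case True then show ?thesis using o g by blast
      next
        case False
        obtain a' b' c2 d' t' s' where x': "(a',b',c2,d',t',s') \<in> set X" and
          o': "({a',b'} = e \<and> {c2,d'} = g) \<or> ({a',b'} = g \<and> {c2,d'} = e)"
          using meet[OF ef(1) g(1) False[symmetric]] ef(4) g(3) by blast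
        have "(a,b,cc,d,t,s) = (a',b',c2,d',t',s')" by (rule same[OF x x', of e]) (use o o' in blast)+
        then show ?thesis using o o' g by auto
      qed
    qed
    then show ?thesis using x cz by blast
  qed
  have "\<forall>c1\<in>false_vertices G \<gamma>. \<forall>c2\<in>false_vertices G \<gamma>.
            c1 \<noteq> c2 \<longrightarrow> card (false_nbrs G \<gamma> c1 \<inter> false_nbrs G \<gamma> c2) \<le> 1"
  proof (intro ballI impI)
    fix c1 c2 assume c: "c1 \<in> false_vertices G \<gamma>" "c2 \<in> false_vertices G \<gamma>" "c1 \<noteq> c2"
    obtain a b cc d t s where x1: "(a,b,cc,d,t,s) \<in> set X" "c1 = (1 - t) *\<^sub>R p a + t *\<^sub>R p b"
       "false_nbrs G \<gamma> c1 \<subseteq> {a,b,cc,d}" using fvx[OF c(1)] by blast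
    obtain a' b' c' d' t' s' where x2: "(a',b',c',d',t',s') \<in> set X" "c2 = (1 - t') *\<^sub>R p a' + t' *\<^sub>R p b'"
       "false_nbrs G \<gamma> c2 \<subseteq> {a',b',c',d'}" using fvx[OF c(2)] by blast
    have "(a,b,cc,d,t,s) \<noteq> (a',b',c',d',t',s')" using x1(2) x2(2) c(3) by auto
    then have "card ({a,b,cc,d} \<inter> {a',b',c',d'}) \<le> 1" using Xd[OF x1(1) x2(1)] by blast
    moreover have "card (false_nbrs G \<gamma> c1 \<inter> false_nbrs G \<gamma> c2) \<le> card ({a,b,cc,d} \<inter> {a',b',c',d'})"
      by (rule card_mono) (use x1(3) x2(3) in auto)
    ultimately show "card (false_nbrs G \<gamma> c1 \<inter> false_nbrs G \<gamma> c2) \<le> 1" by simp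
  qed
  then show ?thesis using opd by blast
qed

lemma r4: "{0..<4::nat} = {0,1,2,3}" by auto
lemma r3: "{0..<3::nat} = {0,1,2}" by auto
lemma r2: "{0..<2::nat} = {0,1}" by auto
lemma rangeSuc: "{f i |i. Suc i < n} = f ` {0..<n-1}" by auto
lemma comp2: "{f u v |u v. u \<in> S \<and> v \<in> T} = (\<lambda>(u,v). f u v) ` (S \<times> T)" by auto
lemma p4: "{{i, Suc i} |i::nat. Suc i < 4} = {{0,1},{1,2},{2,3}}"
  unfolding rangeSuc by (simp add: r3, simp add: numeral_2_eq_2 numeral_3_eq_3)
lemma p3: "{{i, Suc i} |i::nat. Suc i < 3} = {{0,1},{1,2}}"
  unfolding rangeSuc by (simp add: r2, simp add: numeral_2_eq_2)
definition L1 :: "((nat+nat) \<times> (nat+nat)) list" where "L1 = [(Inl 0, Inr 0), (Inl 0, Inr 1), (Inl 0, Inr 2), (Inl 1, Inr 0), (Inl 1, Inr 1), (Inl 1, Inr 2),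
  (Inl 2, Inr 0), (Inl 2, Inr 1), (Inl 2, Inr 2), (Inl 3, Inr 0), (Inl 3, Inr 1), (Inl 3, Inr 2),
  (Inr 0, Inr 1), (Inr 1, Inr 2), (Inl 0, Inl 1), (Inl 1, Inl 2), (Inl 2, Inl 3)]"
lemma E1: "edges (graph_join (path_graph 4) (path_graph 3)) = (\<lambda>(u,v). {u,v}) ` set L1"
  unfolding graph_join_def path_graph_def edges_def verts_def L1_def p4 p3 r4 r3 comp2
  by simp

abbreviation "G1 \<equiv> graph_join (path_graph 4) (path_graph 3)"

lemma V1: "verts G1 = {Inl 0, Inl 1, Inl 2, Inl 3, Inr 0, Inr 1, Inr 2}"
  unfolding graph_join_def path_graph_def verts_def r4 r3 by auto

definition p1 :: "nat + nat \<Rightarrow> complex" where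
  "p1 v = (case v of Inl i \<Rightarrow> (if i = 0 then Complex 2 (-3) else if i = 1 then Complex (-6) (-1)
      else if i = 2 then Complex 6 5 else Complex 4 2)
    | Inr j \<Rightarrow> (if j = 0 then Complex 2 (-4) else if j = 1 then Complex 3 0 else Complex (-1) 0))"

definition X1 :: "((nat+nat) \<times> (nat+nat) \<times> (nat+nat) \<times> (nat+nat) \<times> real \<times> real) list" where
  "X1 = [(Inl 0, Inr 2, Inl 1, Inr 1, 13/15, 3/5), (Inl 2, Inr 1, Inl 3, Inr 0, 3/4, 1/8)]"

lemma injp1: "inj_on p1 (verts G1)" unfolding V1 by (simp add: p1_def)
lemma Lv1: "\<forall>(u,v)\<in>set L1. u \<in> verts G1 \<and> v \<in> verts G1 \<and> u \<noteq> v" unfolding V1 L1_def by simp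
lemma av1: "\<forall>(u,v)\<in>set L1. \<forall>w\<in>verts G1. w = u \<or> w = v \<or> cr (p1 u) (p1 v) (p1 w) \<noteq> 0"
  unfolding V1 L1_def by (simp add: p1_def cr_def)
lemma Xok1: "\<forall>(a,b,c,d,t,s)\<in>set X1. (a,b) \<in> set L1 \<and> (c,d) \<in> set L1 \<and> distinct [a,b,c,d] \<and>
        0 < t \<and> t < 1 \<and> 0 < s \<and> s < 1 \<and>
        (1 - t) *\<^sub>R p1 a + t *\<^sub>R p1 b = (1 - s) *\<^sub>R p1 c + s *\<^sub>R p1 d \<and>
        (Re (p1 b) - Re (p1 a)) * (Im (p1 d) - Im (p1 c)) - (Im (p1 b) - Im (p1 a)) * (Re (p1 d) - Re (p1 c)) \<noteq> 0"
  unfolding X1_def L1_def by (simp add: p1_def complex_eq_iff)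
lemma Xdis1: "\<forall>(a,b,c,d,t,s)\<in>set X1. \<forall>(a',b',c',d',t',s')\<in>set X1. (a,b,c,d,t,s) \<noteq> (a',b',c',d',t',s') \<longrightarrow>
        {a,b} \<noteq> {a',b'} \<and> {a,b} \<noteq> {c',d'} \<and> {c,d} \<noteq> {a',b'} \<and> {c,d} \<noteq> {c',d'} \<and>
        card ({a,b,c,d} \<inter> {a',b',c',d'}) \<le> 1"
  unfolding X1_def by (simp add: doubleton_eq_iff)
lemma pr1: "\<forall>(u,v)\<in>set L1. \<forall>(u',v')\<in>set L1. {u,v} = {u',v'} \<or> sep (p1 u) (p1 v) (p1 u') (p1 v') \<or>
        (\<exists>(a,b,c,d,t,s)\<in>set X1. ({a,b} = {u,v} \<and> {c,d} = {u',v'}) \<or> ({a,b} = {u',v'} \<and> {c,d} = {u,v}))"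
  unfolding L1_def X1_def by (simp add: p1_def sep_def samesign_def cr_def)

lemma E1v: "e \<in> edges G1 \<Longrightarrow> e \<subseteq> verts G1 \<and> card e = 2"
  using Lv1 unfolding E1 by auto

lemma C1_G1: "class_C1 G1"
  unfolding class_C1_def
proof
  show "\<not> class_C0 G1"
  proof (rule notC0[where a = Inl and b = Inr])
    show "finite (verts G1)" unfolding V1 by simp
    show "card (verts G1) \<le> 7" unfolding V1 by simp
    show "\<And>e. e \<in> edges G1 \<Longrightarrow> e \<subseteq> verts G1 \<and> card e = 2" by (rule E1v)
    show "\<And>i j. i < 4 \<Longrightarrow> j < 3 \<Longrightarrow> {Inl i, Inr j} \<in> edges G1"
      unfolding graph_join_def path_graph_def edges_def verts_def by auto
  qed auto
  show "\<exists>p \<gamma>. one_planar_drawing G1 p \<gamma> \<and> (\<forall>c1\<in>false_vertices G1 \<gamma>. \<forall>c2\<in>false_vertices G1 \<gamma>.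
            c1 \<noteq> c2 \<longrightarrow> card (false_nbrs G1 \<gamma> c1 \<inter> false_nbrs G1 \<gamma> c2) \<le> 1)"
    by (rule straight_C1[OF E1 injp1 Lv1 av1 pr1 Xok1 Xdis1])
qed



lemma comp2b: "{f i e |i e. i < (n::nat) \<and> e \<in> S} = (\<lambda>(i,e). f i e) ` ({0..<n} \<times> S)"
  by (auto simp: image_iff) blast+
lemma r1: "{0..<1::nat} = {0}" by auto

abbreviation "G2 \<equiv> graph_join (disj_copies 2 (path_graph 2)) (cycle_graph 3)"

lemma p2e: "{{i, Suc i} |i::nat. Suc i < 2} = {{0,1}}"
  unfolding rangeSuc by (simp add: r1)

lemma V2: "verts G2 = {Inl (0,0), Inl (0,1), Inl (1,0), Inl (1,1), Inr 0, Inr 1, Inr 2}"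
  unfolding graph_join_def disj_copies_def cycle_graph_def path_graph_def verts_def r2 r3 by auto

definition L2 :: "((nat \<times> nat + nat) \<times> (nat \<times> nat + nat)) list" where "L2 = [(Inl (0,0), Inr 0), (Inl (0,0), Inr 1), (Inl (0,0), Inr 2), (Inl (0,1), Inr 0), (Inl (0,1), Inr 1), (Inl (0,1), Inr 2),
  (Inl (1,0), Inr 0), (Inl (1,0), Inr 1), (Inl (1,0), Inr 2), (Inl (1,1), Inr 0), (Inl (1,1), Inr 1), (Inl (1,1), Inr 2),
  (Inr 2, Inr 0), (Inr 0, Inr 1), (Inr 1, Inr 2), (Inl (0,0), Inl (0,1)), (Inl (1,0), Inl (1,1))]"

lemma E2: "edges G2 = (\<lambda>(u,v). {u,v}) ` set L2"
  unfolding graph_join_def disj_copies_def cycle_graph_def path_graph_def edges_def verts_def L2_def p2e p3 r2 r3 comp2 comp2b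
  by simp


definition p2 :: "nat \<times> nat + nat \<Rightarrow> complex" where
  "p2 v = (case v of Inl xy \<Rightarrow> (if xy = (0,0) then Complex 1 3 else if xy = (0,1) then Complex 4 (-1)
      else if xy = (1,0) then Complex (-6) (-6) else Complex 2 6)
    | Inr j \<Rightarrow> (if j = 0 then Complex (-3) (-2) else if j = 1 then Complex 5 (-3) else Complex 2 5))"

definition X2 :: "((nat \<times> nat + nat) \<times> (nat \<times> nat + nat) \<times> (nat \<times> nat + nat) \<times> (nat \<times> nat + nat) \<times> real \<times> real) list" where
  "X2 = [(Inl (0,0), Inr 1, Inl (0,1), Inr 0, 31/46, 1/23), (Inl (1,0), Inr 2, Inl (1,1), Inr 0, 4/9, 8/9)]"

lemma injp2: "inj_on p2 (verts G2)" unfolding V2 by (simp add: p2_def)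
lemma Lv2: "\<forall>(u,v)\<in>set L2. u \<in> verts G2 \<and> v \<in> verts G2 \<and> u \<noteq> v" unfolding V2 L2_def by simp
lemma av2: "\<forall>(u,v)\<in>set L2. \<forall>w\<in>verts G2. w = u \<or> w = v \<or> cr (p2 u) (p2 v) (p2 w) \<noteq> 0"
  unfolding V2 L2_def by (simp add: p2_def cr_def)
lemma Xok2: "\<forall>(a,b,c,d,t,s)\<in>set X2. (a,b) \<in> set L2 \<and> (c,d) \<in> set L2 \<and> distinct [a,b,c,d] \<and>
        0 < t \<and> t < 1 \<and> 0 < s \<and> s < 1 \<and>
        (1 - t) *\<^sub>R p2 a + t *\<^sub>R p2 b = (1 - s) *\<^sub>R p2 c + s *\<^sub>R p2 d \<and>
        (Re (p2 b) - Re (p2 a)) * (Im (p2 d) - Im (p2 c)) - (Im (p2 b) - Im (p2 a)) * (Re (p2 d) - Re (p2 c)) \<noteq> 0"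
  unfolding X2_def L2_def by (simp add: p2_def complex_eq_iff)
lemma Xdis2: "\<forall>(a,b,c,d,t,s)\<in>set X2. \<forall>(a',b',c',d',t',s')\<in>set X2. (a,b,c,d,t,s) \<noteq> (a',b',c',d',t',s') \<longrightarrow>
        {a,b} \<noteq> {a',b'} \<and> {a,b} \<noteq> {c',d'} \<and> {c,d} \<noteq> {a',b'} \<and> {c,d} \<noteq> {c',d'} \<and>
        card ({a,b,c,d} \<inter> {a',b',c',d'}) \<le> 1"
  unfolding X2_def by (simp add: doubleton_eq_iff)
lemma pr2: "\<forall>(u,v)\<in>set L2. \<forall>(u',v')\<in>set L2. {u,v} = {u',v'} \<or> sep (p2 u) (p2 v) (p2 u') (p2 v') \<or>
        (\<exists>(a,b,c,d,t,s)\<in>set X2. ({a,b} = {u,v} \<and> {c,d} = {u',v'}) \<or> ({a,b} = {u',v'} \<and> {c,d} = {u,v}))"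
  unfolding L2_def X2_def by (simp add: p2_def sep_def samesign_def cr_def)

lemma E2v: "e \<in> edges G2 \<Longrightarrow> e \<subseteq> verts G2 \<and> card e = 2"
  using Lv2 unfolding E2 by auto

lemma C1_G2: "class_C1 G2"
  unfolding class_C1_def
proof
  show "\<not> class_C0 G2"
  proof (rule notC0[where a = "\<lambda>i. Inl (i div 2, i mod 2)" and b = Inr])
    show "finite (verts G2)" unfolding V2 by simp
    show "card (verts G2) \<le> 7" unfolding V2 by simp
    show "\<And>e. e \<in> edges G2 \<Longrightarrow> e \<subseteq> verts G2 \<and> card e = 2" by (rule E2v)
    show "{Inl (i div 2, i mod 2), Inr j} \<in> edges G2" if "i < 4" "j < 3" for i j :: nat
    proof -
      have h: "(i div 2, i mod 2) \<in> {0..<2} \<times> {0..<2}" "j \<in> {0..<3}" using that by auto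
      show ?thesis
        unfolding graph_join_def disj_copies_def cycle_graph_def path_graph_def edges_def verts_def snd_conv fst_conv
        by (intro UnI2 CollectI exI[of _ "(i div 2, i mod 2)"] exI[of _ j] conjI refl h)
    qed
    show "i = k" if "i < 4" "k < 4" "(Inl (i div 2, i mod 2) :: nat \<times> nat + nat) = Inl (k div 2, k mod 2)" for i k :: nat
    proof -
      have d: "i div 2 = k div 2" "i mod 2 = k mod 2" using that(3) by simp_all
      then show ?thesis by presburger
    qed
  qed auto
  show "\<exists>p \<gamma>. one_planar_drawing G2 p \<gamma> \<and> (\<forall>c1\<in>false_vertices G2 \<gamma>. \<forall>c2\<in>false_vertices G2 \<gamma>.
            c1 \<noteq> c2 \<longrightarrow> card (false_nbrs G2 \<gamma> c1 \<inter> false_nbrs G2 \<gamma> c2) \<le> 1)"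
    by (rule straight_C1[OF E2 injp2 Lv2 av2 pr2 Xok2 Xdis2])
qed

theorem lemma11:
  shows "class_C1 (graph_join (path_graph 4) (path_graph 3)) \<and>
         class_C1 (graph_join (disj_copies 2 (path_graph 2)) (cycle_graph 3))"
  using C1_G1 C1_G2 by (rule conjI)

end
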